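(* Let $(\Omega,\mathcal F,\mathbb P)$ be either an atomless probability space or the equiprobable space $(\{1,\dots,m\},2^{\{1,\dots,m\}},\mathbb P)$ with $\mathbb P(\{k\})=1/m$. Let $\mathcal P_1,\dots,\mathcal P_n$ be nonempty sets of probability measures on $(\Omega,\mathcal F)$, all absolutely continuous with respect to $\mathbb P$, and let $\alpha_1,\dots,\alpha_n\in(0,1)$. Fix a bounded measurable $X$. Suppose that $\mathrm d\mathbb Q/\mathrm d\mathbb P$ is decreasing in $X$ for every $\mathbb Q\in\mathcal P_1$ and increasing in $X$ for every $\mathbb Q\in\mathcal P_i$, $i=2,\dots,n$. Let $x^*=\mathop{\square}_{i=1}^n\sup_{\mathbb Q\in\mathcal P_i}\mathrm{VaR}^{\mathbb Q}_{\alpha_i}(X)$ and suppose the optimal allocation exists in the sense that $x^*>-\infty$ and there is $(A_1,\dots,A_n)\in\Pi_n$ with $\sup_{\mathbb Q\in\mathcal P_i}\mathbb Q(A_i\cap\{X>x^*\})\le\alpha_i$ for all $i$ (so that $X_i=(X-x^* )\mathds 1_{A_i}+x^*/n$ is an optimal allocation). Then such an optimal composition $(A_1^*,\dots,A_n^* )\in\Pi_n$ can be chosen so that $A_1^*$ is a tail event of $X$, meaning $X(\omega)\ge X(\omega')$ for all $\omega\in A_1^*$ and $\omega'\notin A_1^*$.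
   Context: For a probability $\mathbb Q$ and $\alpha\in(0,1)$, $\mathrm{VaR}^{\mathbb Q}_\alpha(X)=\inf\{x\in\mathbb R:\mathbb Q(X\ge x)\le\alpha\}$. Inf-convolution: $\mathop{\square}_{i=1}^n\rho_i(X)=\inf\{\sum_i\rho_i(X_i): X_i$ bounded measurable, $\sum_iX_i=X\}$. $\Pi_n=\{(A_1,\dots,A_n)\in\mathcal F^n:\bigcup_iA_i=\Omega\}$. "$\mathrm d\mathbb Q/\mathrm d\mathbb P$ is decreasing (resp. increasing) in $X$" means the Radon–Nikodym density is a decreasing (resp. increasing) function of $X$. *)

theory Defs
  imports "HOL-Probability.Probability"
begin

definition VaR :: "'a measure \<Rightarrow> real \<Rightarrow> ('a \<Rightarrow> real) \<Rightarrow> real" where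
  "VaR Q \<alpha> X = Inf {x. measure Q {\<omega> \<in> space Q. X \<omega> \<ge> x} \<le> \<alpha>}"

definition bounded_rv :: "'a measure \<Rightarrow> ('a \<Rightarrow> real) \<Rightarrow> bool" where
  "bounded_rv M Y \<longleftrightarrow> Y \<in> borel_measurable M \<and> (\<exists>B. \<forall>\<omega>\<in>space M. \<bar>Y \<omega>\<bar> \<le> B)"

definition robust_VaR :: "'a measure set \<Rightarrow> real \<Rightarrow> ('a \<Rightarrow> real) \<Rightarrow> ereal" where
  "robust_VaR PP \<alpha> Y = (SUP Q\<in>PP. ereal (VaR Q \<alpha> Y))"

definition inf_conv :: "'a measure \<Rightarrow> nat \<Rightarrow> (nat \<Rightarrow> ('a \<Rightarrow> real) \<Rightarrow> ereal) \<Rightarrow> ('a \<Rightarrow> real) \<Rightarrow> ereal" where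
  "inf_conv M n \<rho> X = (INF Xs\<in>{Xs :: nat \<Rightarrow> 'a \<Rightarrow> real.
        (\<forall>i\<in>{1..n}. bounded_rv M (Xs i)) \<and> (\<forall>\<omega>\<in>space M. (\<Sum>i=1..n. Xs i \<omega>) = X \<omega>)}.
      \<Sum>i=1..n. \<rho> i (Xs i))"

definition Pi_n :: "'a measure \<Rightarrow> nat \<Rightarrow> (nat \<Rightarrow> 'a set) set" where
  "Pi_n M n = {A. (\<forall>i\<in>{1..n}. A i \<in> sets M) \<and> (\<Union>i\<in>{1..n}. A i) = space M}"

definition atomless :: "'a measure \<Rightarrow> bool" where
  "atomless M \<longleftrightarrow> (\<forall>A\<in>sets M. 0 < measure M A \<longrightarrow>
      (\<exists>B\<in>sets M. B \<subseteq> A \<and> 0 < measure M B \<and> measure M B < measure M A))"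

text \<open>Equiprobable finite space ({1..m}, power set, P({k}) = 1/m), up to relabelling of points.\<close>
definition equiprobable :: "'a measure \<Rightarrow> bool" where
  "equiprobable M \<longleftrightarrow> finite (space M) \<and> space M \<noteq> {} \<and> sets M = Pow (space M) \<and>
      (\<forall>\<omega>\<in>space M. measure M {\<omega>} = 1 / real (card (space M)))"

text \<open>dQ/dP is decreasing (resp. increasing) in X: the Radon-Nikodym density equals
  (P-a.s., densities being defined only a.s.) a decreasing (resp. increasing) function of X.\<close>
definition density_decreasing_in :: "'a measure \<Rightarrow> 'a measure \<Rightarrow> ('a \<Rightarrow> real) \<Rightarrow> bool" where
  "density_decreasing_in M Q X \<longleftrightarrow>
     (\<exists>f :: real \<Rightarrow> ennreal. antimono f \<and> (AE \<omega> in M. RN_deriv M Q \<omega> = f (X \<omega>)))"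

definition density_increasing_in :: "'a measure \<Rightarrow> 'a measure \<Rightarrow> ('a \<Rightarrow> real) \<Rightarrow> bool" where
  "density_increasing_in M Q X \<longleftrightarrow>
     (\<exists>f :: real \<Rightarrow> ennreal. mono f \<and> (AE \<omega> in M. RN_deriv M Q \<omega> = f (X \<omega>)))"

end

theory Submission
  imports Defs
begin

lemma cmp_RN:
  assumes M: "prob_space M" and Q: "finite_measure Q" "sets Q = sets M" "absolutely_continuous M Q"
    and U: "U \<in> sets M" and L: "L \<in> sets M"
    and AU: "AE \<omega> in M. \<omega> \<in> U \<longrightarrow> RN_deriv M Q \<omega> \<le> k"
    and AL: "AE \<omega> in M. \<omega> \<in> L \<longrightarrow> k \<le> RN_deriv M Q \<omega>"
    and le: "measure M U \<le> measure M L"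
  shows "measure Q U \<le> measure Q L"
proof -
  interpret prob_space M by fact
  interpret q: finite_measure Q by fact
  have dens: "density M (RN_deriv M Q) = Q" using Q by (simp add: density_RN_deriv)
  have eU: "emeasure Q U = (\<integral>\<^sup>+x. RN_deriv M Q x * indicator U x \<partial>M)"
    using U by (subst dens[symmetric]) (simp add: emeasure_density nn_integral_set_ennreal mult.commute)
  have eL: "emeasure Q L = (\<integral>\<^sup>+x. RN_deriv M Q x * indicator L x \<partial>M)"
    using L by (subst dens[symmetric]) (simp add: emeasure_density mult.commute)
  have "emeasure Q U \<le> (\<integral>\<^sup>+x. k * indicator U x \<partial>M)"
    unfolding eU by (rule nn_integral_mono_AE) (use AU in \<open>auto split: split_indicator elim!: eventually_mono\<close>)
  also have "\<dots> = k * emeasure M U" using U by (rule nn_integral_cmult_indicator)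
  also have "\<dots> \<le> k * emeasure M L"
    using le by (intro mult_left_mono) (simp_all add: emeasure_eq_measure)
  also have "\<dots> = (\<integral>\<^sup>+x. k * indicator L x \<partial>M)" using L by (rule nn_integral_cmult_indicator[symmetric])
  also have "\<dots> \<le> emeasure Q L"
    unfolding eL by (rule nn_integral_mono_AE) (use AL in \<open>auto split: split_indicator elim!: eventually_mono\<close>)
  finally show ?thesis by (simp add: q.emeasure_eq_measure)
qed


lemma atomless_halving:
  assumes M: "prob_space M" and at: "atomless M" and A: "A \<in> sets M" "0 < measure M A"
  shows "\<exists>B\<in>sets M. B \<subseteq> A \<and> 0 < measure M B \<and> measure M B \<le> measure M A / 2 ^ k"
proof (induction k)
  case 0 then show ?case using A by auto
next
  case (Suc k)
  interpret prob_space M by fact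
  from Suc obtain B where B: "B \<in> sets M" "B \<subseteq> A" "0 < measure M B" "measure M B \<le> measure M A / 2 ^ k" by auto
  from at B obtain C where C: "C \<in> sets M" "C \<subseteq> B" "0 < measure M C" "measure M C < measure M B"
    unfolding atomless_def by blast
  have d: "measure M (B - C) = measure M B - measure M C" using B C by (simp add: finite_measure_Diff)
  show ?case
  proof (cases "measure M C \<le> measure M B / 2")
    case True then show ?thesis using B C by (intro bexI[of _ C]) auto
  next
    case False then show ?thesis using B C d by (intro bexI[of _ "B - C"]) auto
  qed
qed

lemma atomless_small:
  assumes M: "prob_space M" and at: "atomless M" and A: "A \<in> sets M" "0 < measure M A" and e: "0 < e"
  shows "\<exists>B\<in>sets M. B \<subseteq> A \<and> 0 < measure M B \<and> measure M B < e"
proof -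
  interpret prob_space M by fact
  obtain k where k: "(1/2::real) ^ k < e" using real_arch_pow_inv[of e "1/2"] e by auto
  obtain B where B: "B\<in>sets M" "B \<subseteq> A" "0 < measure M B" "measure M B \<le> measure M A / 2 ^ k"
    using atomless_halving[OF M at A] by blast
  have "measure M A / 2 ^ k \<le> 1 / 2 ^ k" by (intro divide_right_mono) auto
  also have "\<dots> = (1/2) ^ k" by (simp add: power_divide)
  finally show ?thesis using B k by (intro bexI[of _ B]) auto
qed


lemma atomless_split:
  assumes M: "prob_space M" and at: "atomless M" and E: "E \<in> sets M"
    and t: "0 \<le> t" "t \<le> measure M E"
  shows "\<exists>F\<in>sets M. F \<subseteq> E \<and> measure M F = t"
proof -
  interpret prob_space M by fact
  define cand where "cand F = {measure M G | G. G \<in> sets M \<and> G \<subseteq> E - F \<and> measure M G \<le> t - measure M F}" for F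
  define good where "good F G \<longleftrightarrow> G \<in> sets M \<and> G \<subseteq> E - F \<and> measure M G \<le> t - measure M F \<and> Sup (cand F) / 2 \<le> measure M G" for F G
  define nxt where "nxt F = F \<union> (SOME G. good F G)" for F
  define inv where "inv F \<longleftrightarrow> F \<in> sets M \<and> F \<subseteq> E \<and> measure M F \<le> t" for F
  have bdd: "bdd_above (cand F)" for F
    unfolding cand_def by (rule bdd_aboveI[of _ 1]) auto
  have ne: "inv F \<Longrightarrow> cand F \<noteq> {}" for F
    unfolding cand_def inv_def by (auto intro!: exI[of _ "{}"])
  have ex: "\<exists>G. good F G" if iF: "inv F" for F
  proof (cases "Sup (cand F) \<le> 0")
    case True then show ?thesis using that unfolding good_def inv_def by (intro exI[of _ "{}"]) auto
  next
    case False
    then have "Sup (cand F) / 2 < Sup (cand F)" by simp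
    then obtain x where "x \<in> cand F" "Sup (cand F) / 2 < x"
      using less_cSup_iff[OF ne[OF iF] bdd] by auto
    then show ?thesis unfolding good_def cand_def by auto
  qed
  have step: "inv (nxt F) \<and> F \<subseteq> nxt F \<and> measure M (nxt F) \<ge> measure M F + Sup (cand F) / 2" if "inv F" for F
  proof -
    define G where "G = (SOME G. good F G)"
    have g: "good F G" unfolding G_def using someI_ex[OF ex[OF that]] .
    have m: "measure M (nxt F) = measure M F + measure M G"
      unfolding nxt_def G_def[symmetric] using g that unfolding good_def inv_def
      by (intro finite_measure_Union) auto
    show ?thesis using g that m unfolding good_def inv_def nxt_def G_def[symmetric] by auto
  qed
  define Fs where "Fs k = (nxt ^^ k) {}" for k
  have Fs_Suc: "Fs (Suc k) = nxt (Fs k)" for k unfolding Fs_def by simp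
  have invk: "inv (Fs k)" for k
    by (induction k) (auto simp: Fs_Suc step, auto simp: Fs_def inv_def t)
  have inc: "incseq Fs" using step invk by (intro incseq_SucI) (simp add: Fs_Suc)
  define F where "F = (\<Union>k. Fs k)"
  have Fs_sets: "range Fs \<subseteq> sets M" using invk unfolding inv_def by auto
  have F_sets: "F \<in> sets M" unfolding F_def using Fs_sets by auto
  have FE: "F \<subseteq> E" unfolding F_def using invk inv_def by auto
  have lim: "(\<lambda>k. measure M (Fs k)) \<longlonglongrightarrow> measure M F"
    unfolding F_def using Fs_sets inc by (intro Lim_measure_incseq) auto
  have le: "measure M F \<le> t"
    using lim invk unfolding inv_def by (intro LIMSEQ_le_const2) auto
  have "\<not> measure M F < t"
  proof
    assume lt: "measure M F < t"
    have "measure M (E - F) = measure M E - measure M F" using E F_sets FE by (simp add: finite_measure_Diff)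
    then have pos: "0 < measure M (E - F)" using lt t by simp
    obtain B where B: "B \<in> sets M" "B \<subseteq> E - F" "0 < measure M B" "measure M B < t - measure M F"
      using atomless_small[OF M at _ pos, of "t - measure M F"] E F_sets lt by auto
    have FsF: "Fs k \<subseteq> F" for k unfolding F_def by auto
    have mFs: "measure M (Fs k) \<le> measure M F" for k using FsF F_sets by (intro finite_measure_mono)
    have inc2: "measure M (Fs (Suc k)) \<ge> measure M (Fs k) + measure M B / 2" for k
    proof -
      have "measure M B \<in> cand (Fs k)" unfolding cand_def using B FsF[of k] mFs[of k] by force
      then have "measure M B \<le> Sup (cand (Fs k))" using bdd by (intro cSup_upper)
      then show ?thesis using step[OF invk[of k]] by (simp add: Fs_Suc)
    qed
    have lin: "measure M (Fs k) \<ge> real k * (measure M B / 2)" for k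
    proof (induction k)
      case 0 then show ?case by simp
    next
      case (Suc k) then show ?case using inc2[of k] by (simp add: algebra_simps)
    qed
    obtain k where "1 < real k * (measure M B / 2)" using ex_less_of_nat_mult[of "measure M B / 2" 1] B by auto
    with lin[of k] show False by (smt (verit) prob_le_1)
  qed
  with le have "measure M F = t" by simp
  then show ?thesis using F_sets FE by auto
qed


definition splitP :: "'a measure \<Rightarrow> bool" where
  "splitP M \<longleftrightarrow> (\<forall>E\<in>sets M. \<forall>G\<in>sets M. \<forall>H\<in>sets M. measure M H \<le> measure M G \<longrightarrow>
     measure M G - measure M H \<le> measure M E \<longrightarrow>
     (\<exists>F\<in>sets M. F \<subseteq> E \<and> measure M F = measure M G - measure M H))"

lemma equi_measure:
  assumes M: "prob_space M" and eq: "equiprobable M" and F: "F \<subseteq> space M"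
  shows "measure M F = real (card F) / real (card (space M))"
proof -
  interpret prob_space M by fact
  have fin: "finite (space M)" and s: "sets M = Pow (space M)" using eq unfolding equiprobable_def by auto
  have "measure M F = (\<Sum>x\<in>F. measure M {x})"
    using F fin s by (intro measure_eq_sum_singleton) (auto intro: finite_subset)
  also have "\<dots> = (\<Sum>x\<in>F. 1 / real (card (space M)))"
    using F eq unfolding equiprobable_def by (intro sum.cong) auto
  finally show ?thesis by simp
qed

lemma splitP_equi:
  assumes M: "prob_space M" and eq: "equiprobable M"
  shows "splitP M"
  unfolding splitP_def
proof (intro ballI impI)
  fix E G H assume EGH: "E \<in> sets M" "G \<in> sets M" "H \<in> sets M"
    and le1: "measure M H \<le> measure M G" and le2: "measure M G - measure M H \<le> measure M E"
  have fin: "finite (space M)" and ne: "space M \<noteq> {}" and s: "sets M = Pow (space M)"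
    using eq unfolding equiprobable_def by auto
  have sub: "E \<subseteq> space M" "G \<subseteq> space M" "H \<subseteq> space M" using EGH s by auto
  define m where "m = real (card (space M))"
  have m: "m > 0" unfolding m_def using fin ne by (simp add: card_gt_0_iff)
  note em = equi_measure[OF M eq, folded m_def]
  have "real (card H) / m \<le> real (card G) / m" using le1 em sub by simp
  then have c1: "card H \<le> card G" using m by (simp add: divide_le_cancel)
  have "(real (card G) - real (card H)) / m \<le> real (card E) / m" using le2 em sub by (simp add: diff_divide_distrib)
  then have "real (card G) - real (card H) \<le> real (card E)" using m by (simp add: divide_le_cancel)
  then have c2: "card G - card H \<le> card E" using c1 by linarith
  obtain T where T: "T \<subseteq> E" "card T = card G - card H" using obtain_subset_with_card_n[OF c2] by metis
  have "measure M T = measure M G - measure M H"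
    using T sub c1 em[of T] em[of G] em[of H] by (simp add: of_nat_diff diff_divide_distrib)
  then show "\<exists>F\<in>sets M. F \<subseteq> E \<and> measure M F = measure M G - measure M H"
    using T sub s by auto
qed

lemma splitP_atomless:
  assumes M: "prob_space M" and at: "atomless M"
  shows "splitP M"
  unfolding splitP_def using atomless_split[OF M at] by auto


lemma split_family:
  fixes k :: nat and R :: "nat \<Rightarrow> 'a set"
  assumes M: "prob_space M" and sp: "splitP M" and k: "2 \<le> k"
  shows "E \<in> sets M \<Longrightarrow> (\<forall>i\<in>{2..k}. R i \<in> sets M) \<Longrightarrow> (\<Sum>i\<in>{2..k}. measure M (R i)) = measure M E \<Longrightarrow>
    \<exists>C. (\<forall>i\<in>{2..k}. C i \<in> sets M \<and> C i \<subseteq> E \<and> measure M (C i) = measure M (R i)) \<and> (\<Union>i\<in>{2..k}. C i) = E"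
  using k
proof (induction k arbitrary: E rule: nat_induct_at_least)
  case base
  then show ?case by (intro exI[of _ "\<lambda>_. E"]) auto
next
  case (Suc k)
  interpret prob_space M by fact
  have sum: "(\<Sum>i\<in>{2..Suc k}. measure M (R i)) = (\<Sum>i\<in>{2..k}. measure M (R i)) + measure M (R (Suc k))"
    using Suc.hyps by simp
  have nn: "0 \<le> (\<Sum>i\<in>{2..k}. measure M (R i))" by (intro sum_nonneg) auto
  have "Suc k \<in> {2..Suc k}" using Suc.hyps by simp
  then have Rk: "R (Suc k) \<in> sets M" using Suc.prems(2) by blast
  have le: "measure M (R (Suc k)) \<le> measure M E" using sum Suc.prems(3) nn by linarith
  obtain F where F: "F \<in> sets M" "F \<subseteq> E" "measure M F = measure M (R (Suc k)) - measure M {}"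
    using sp[unfolded splitP_def, rule_format, of E "R (Suc k)" "{}"] Suc.prems(1) Rk le by auto
  have E': "E - F \<in> sets M" using F Suc.prems by auto
  have mE': "measure M (E - F) = measure M E - measure M F" using F Suc.prems(1) by (simp add: finite_measure_Diff)
  obtain C where C: "\<forall>i\<in>{2..k}. C i \<in> sets M \<and> C i \<subseteq> E - F \<and> measure M (C i) = measure M (R i)"
    "(\<Union>i\<in>{2..k}. C i) = E - F"
    using Suc.IH[OF E'] Suc.prems sum mE' F by auto
  define C' where "C' = C(Suc k := F)"
  have P1: "\<forall>i\<in>{2..Suc k}. C' i \<in> sets M \<and> C' i \<subseteq> E \<and> measure M (C' i) = measure M (R i)"
  proof
    fix i assume i: "i \<in> {2..Suc k}"
    show "C' i \<in> sets M \<and> C' i \<subseteq> E \<and> measure M (C' i) = measure M (R i)"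
      unfolding C'_def using C(1) F i by (cases "i = Suc k") auto
  qed
  have "(\<Union>i\<in>{2..Suc k}. C' i) = (\<Union>i\<in>{2..k}. C i) \<union> F"
    unfolding C'_def using Suc.hyps by (auto simp: atLeastAtMostSuc_conv)
  then have P2: "(\<Union>i\<in>{2..Suc k}. C' i) = E" using C(2) F by auto
  show ?case using P1 P2 by blast
qed


lemma upper_set:
  fixes X :: "'a \<Rightarrow> real" and Bd :: real
  assumes M: "prob_space M" and sp: "splitP M" and S: "S \<in> sets M" and D: "D \<in> sets M" "D \<subseteq> S"
    and Xm: "X \<in> borel_measurable M" and Bd: "\<forall>\<omega>\<in>space M. \<bar>X \<omega>\<bar> \<le> Bd"
  shows "\<exists>B c. B \<in> sets M \<and> B \<subseteq> S \<and> measure M B = measure M D \<and> (\<forall>\<omega>\<in>B. c \<le> X \<omega>) \<and> (\<forall>\<omega>\<in>S - B. X \<omega> \<le> c)"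
proof -
  interpret prob_space M by fact
  have Ssp: "S \<subseteq> space M" using S sets.sets_into_space by auto
  have DS: "measure M D \<le> measure M S" using D S by (intro finite_measure_mono)
  show ?thesis
  proof (cases "measure M D = measure M S")
    case True
    then show ?thesis using S Ssp Bd by (intro exI[of _ S] exI[of _ "-Bd"]) (auto dest!: bspec)
  next
    case False
    with DS have lt: "measure M D < measure M S" by simp
    define p where "p = measure M D"
    define U where "U x = {\<omega>\<in>S. x < X \<omega>}" for x
    have Um: "U x \<in> sets M" for x
    proof -
      have "{\<omega> \<in> space M. x < X \<omega>} \<in> sets M" using Xm by measurable
      moreover have "U x = S \<inter> {\<omega> \<in> space M. x < X \<omega>}" unfolding U_def using Ssp by auto
      ultimately show ?thesis using S by auto
    qed
    define T where "T = {x. measure M (U x) \<le> p}"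
    have BdT: "Bd \<in> T"
    proof -
      have "U Bd = {}" unfolding U_def using Ssp Bd by force
      then show ?thesis unfolding T_def p_def by simp
    qed
    have lowT: "-Bd \<le> x" if "x \<in> T" for x
    proof (rule ccontr)
      assume "\<not> -Bd \<le> x"
      then have "U x = S" unfolding U_def using Ssp Bd by force
      then show False using that lt unfolding T_def p_def by simp
    qed
    have Tne: "T \<noteq> {}" using BdT by auto
    have Tbdd: "bdd_below T" using lowT by (intro bdd_belowI) 
    define c where "c = Inf T"
    have Umono: "x \<le> y \<Longrightarrow> U y \<subseteq> U x" for x y unfolding U_def by auto
    have c1: "measure M (U c) \<le> p"
    proof -
      define W where "W n = U (c + 1 / (Suc n))" for n
      have incW: "incseq W"
      proof (rule incseq_SucI)
        fix n
        have "1 / real (Suc (Suc n)) \<le> 1 / real (Suc n)" by (simp add: frac_le)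
        then show "W n \<subseteq> W (Suc n)" unfolding W_def by (intro Umono) simp
      qed
      have UW: "U c = (\<Union>n. W n)"
      proof
        show "U c \<subseteq> (\<Union>n. W n)"
        proof
          fix \<omega> assume w: "\<omega> \<in> U c"
          then have "0 < X \<omega> - c" unfolding U_def by auto
          then obtain n where "1 / real (Suc n) < X \<omega> - c" using nat_approx_posE by blast
          then show "\<omega> \<in> (\<Union>n. W n)" using w unfolding W_def U_def by (auto intro!: exI[of _ n])
        qed
        show "(\<Union>n. W n) \<subseteq> U c" unfolding W_def using Umono by (auto intro: Umono[THEN subsetD, rotated])
      qed
      have lim: "(\<lambda>n. measure M (W n)) \<longlonglongrightarrow> measure M (U c)"
        unfolding UW using incW Um unfolding W_def by (intro Lim_measure_incseq) auto
      have "measure M (W n) \<le> p" for n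
      proof -
        have "Inf T < c + 1 / Suc n" unfolding c_def by simp
        then obtain x where x: "x \<in> T" "x < c + 1 / Suc n" using cInf_less_iff[OF Tne Tbdd] by auto
        have "measure M (W n) \<le> measure M (U x)" unfolding W_def using x Um by (intro finite_measure_mono Umono) auto
        then show ?thesis using x unfolding T_def by auto
      qed
      then show ?thesis using lim by (intro LIMSEQ_le_const2) auto
    qed
    define V where "V = {\<omega>\<in>S. c \<le> X \<omega>}"
    have c2: "p \<le> measure M V"
    proof -
      define W where "W n = U (c - 1 / (Suc n))" for n
      have decW: "decseq W"
      proof (rule decseq_SucI)
        fix n
        have "1 / real (Suc (Suc n)) \<le> 1 / real (Suc n)" by (simp add: frac_le)
        then show "W (Suc n) \<subseteq> W n" unfolding W_def by (intro Umono) simp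
      qed
      have VW: "V = (\<Inter>n. W n)"
      proof
        show "V \<subseteq> (\<Inter>n. W n)"
        proof
          fix \<omega> assume "\<omega> \<in> V"
          moreover have "0 < 1 / real (Suc n)" for n by simp
          ultimately show "\<omega> \<in> (\<Inter>n. W n)" unfolding V_def W_def U_def by (smt (verit) INT_I mem_Collect_eq)
        qed
        show "(\<Inter>n. W n) \<subseteq> V"
        proof
          fix \<omega> assume w: "\<omega> \<in> (\<Inter>n. W n)"
          then have wS: "\<omega> \<in> S" unfolding W_def U_def by auto
          have "c \<le> X \<omega>"
          proof (rule ccontr)
            assume "\<not> c \<le> X \<omega>"
            then have "0 < c - X \<omega>" by simp
            then obtain n where "1 / real (Suc n) < c - X \<omega>" using nat_approx_posE by blast
            moreover have "\<omega> \<in> W n" using w by auto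
            ultimately show False unfolding W_def U_def by auto
          qed
          then show "\<omega> \<in> V" using wS unfolding V_def by auto
        qed
      qed
      have lim: "(\<lambda>n. measure M (W n)) \<longlonglongrightarrow> measure M V"
        unfolding VW using decW Um unfolding W_def by (intro Lim_measure_decseq) auto
      have "p \<le> measure M (W n)" for n
      proof -
        have "c - 1 / Suc n \<notin> T"
        proof
          assume "c - 1 / Suc n \<in> T"
          then have "c \<le> c - 1 / Suc n" unfolding c_def using Tbdd by (intro cInf_lower)
          then show False by simp
        qed
        then show ?thesis unfolding T_def W_def by simp
      qed
      then show ?thesis using lim by (intro LIMSEQ_le_const) auto
    qed
    have Vm: "V \<in> sets M"
    proof -
      have "{\<omega> \<in> space M. c \<le> X \<omega>} \<in> sets M" using Xm by measurable
      moreover have "V = S \<inter> {\<omega> \<in> space M. c \<le> X \<omega>}" unfolding V_def using Ssp by auto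
      ultimately show ?thesis using S by auto
    qed
    have UV: "U c \<subseteq> V" unfolding U_def V_def by auto
    define L where "L = V - U c"
    have Lm: "L \<in> sets M" unfolding L_def using Vm Um by auto
    have mL: "measure M L = measure M V - measure M (U c)" unfolding L_def using Vm Um UV by (simp add: finite_measure_Diff)
    obtain F where F: "F \<in> sets M" "F \<subseteq> L" "measure M F = measure M D - measure M (U c)"
      using sp[unfolded splitP_def, rule_format, of L D "U c"] Lm D Um c1 c2 mL unfolding p_def by auto
    define B where "B = U c \<union> F"
    have FU: "U c \<inter> F = {}" using F unfolding L_def by auto
    have mB: "measure M B = measure M D" unfolding B_def using F Um FU by (simp add: finite_measure_Union)
    have "B \<subseteq> S" unfolding B_def L_def U_def V_def using F unfolding L_def U_def V_def by auto
    moreover have "\<forall>\<omega>\<in>B. c \<le> X \<omega>" unfolding B_def using F unfolding L_def U_def V_def by auto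
    moreover have "\<forall>\<omega>\<in>S - B. X \<omega> \<le> c" unfolding B_def U_def by auto
    ultimately show ?thesis using mB F Um unfolding B_def by (intro exI[of _ "U c \<union> F"] exI[of _ c]) auto
  qed
qed


lemma cmp_dec:
  fixes X :: "'a \<Rightarrow> real"
  assumes M: "prob_space M" and Q: "prob_space Q" "sets Q = sets M" "absolutely_continuous M Q"
    and dd: "density_decreasing_in M Q X"
    and U: "U \<in> sets M" and L: "L \<in> sets M"
    and cU: "\<forall>\<omega>\<in>U. c \<le> X \<omega>" and cL: "\<forall>\<omega>\<in>L. X \<omega> \<le> c"
    and le: "measure M U \<le> measure M L"
  shows "measure Q U \<le> measure Q L"
proof -
  obtain f :: "real \<Rightarrow> ennreal" where f: "antimono f" "AE \<omega> in M. RN_deriv M Q \<omega> = f (X \<omega>)"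
    using dd unfolding density_decreasing_in_def by blast
  have fQ: "finite_measure Q" using Q(1) by (simp add: prob_space_def)
  show ?thesis
  proof (rule cmp_RN[OF M fQ Q(2,3) U L _ _ le, of "f c"])
    show "AE \<omega> in M. \<omega> \<in> U \<longrightarrow> RN_deriv M Q \<omega> \<le> f c"
      using f(2) by eventually_elim (use cU f(1) in \<open>auto simp: antimono_def\<close>)
    show "AE \<omega> in M. \<omega> \<in> L \<longrightarrow> f c \<le> RN_deriv M Q \<omega>"
      using f(2) by eventually_elim (use cL f(1) in \<open>auto simp: antimono_def\<close>)
  qed
qed

lemma cmp_inc:
  fixes X :: "'a \<Rightarrow> real"
  assumes M: "prob_space M" and Q: "prob_space Q" "sets Q = sets M" "absolutely_continuous M Q"
    and dd: "density_increasing_in M Q X"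
    and U: "U \<in> sets M" and L: "L \<in> sets M"
    and cU: "\<forall>\<omega>\<in>U. X \<omega> \<le> c" and cL: "\<forall>\<omega>\<in>L. c \<le> X \<omega>"
    and le: "measure M U \<le> measure M L"
  shows "measure Q U \<le> measure Q L"
proof -
  obtain f :: "real \<Rightarrow> ennreal" where f: "mono f" "AE \<omega> in M. RN_deriv M Q \<omega> = f (X \<omega>)"
    using dd unfolding density_increasing_in_def by blast
  have fQ: "finite_measure Q" using Q(1) by (simp add: prob_space_def)
  show ?thesis
  proof (rule cmp_RN[OF M fQ Q(2,3) U L _ _ le, of "f c"])
    show "AE \<omega> in M. \<omega> \<in> U \<longrightarrow> RN_deriv M Q \<omega> \<le> f c"
      using f(2) by eventually_elim (use cU f(1) in \<open>auto simp: mono_def\<close>)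
    show "AE \<omega> in M. \<omega> \<in> L \<longrightarrow> f c \<le> RN_deriv M Q \<omega>"
      using f(2) by eventually_elim (use cL f(1) in \<open>auto simp: mono_def\<close>)
  qed
qed


theorem proposition8:
  fixes M :: "'a measure" and n :: nat and PP :: "nat \<Rightarrow> 'a measure set"
    and \<alpha> :: "nat \<Rightarrow> real" and X :: "'a \<Rightarrow> real"
  assumes "prob_space M"
    and "atomless M \<or> equiprobable M"
    and "n \<ge> 1"
    and "\<forall>i\<in>{1..n}. PP i \<noteq> {}"
    and "\<forall>i\<in>{1..n}. \<forall>Q\<in>PP i. prob_space Q \<and> sets Q = sets M \<and> absolutely_continuous M Q"
    and "\<forall>i\<in>{1..n}. 0 < \<alpha> i \<and> \<alpha> i < 1"
    and "bounded_rv M X"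
    and "\<forall>Q\<in>PP 1. density_decreasing_in M Q X"
    and "\<forall>i\<in>{2..n}. \<forall>Q\<in>PP i. density_increasing_in M Q X"
    and "x_star = inf_conv M n (\<lambda>i. robust_VaR (PP i) (\<alpha> i)) X"
    and "x_star > -\<infinity>"
    and "A \<in> Pi_n M n"
    and "\<forall>i\<in>{1..n}. \<forall>Q\<in>PP i. measure Q (A i \<inter> {\<omega>\<in>space M. ereal (X \<omega>) > x_star}) \<le> \<alpha> i"
  shows "\<exists>A'\<in>Pi_n M n.
           (\<forall>i\<in>{1..n}. \<forall>Q\<in>PP i. measure Q (A' i \<inter> {\<omega>\<in>space M. ereal (X \<omega>) > x_star}) \<le> \<alpha> i)
         \<and> (\<forall>\<omega>\<in>A' 1. \<forall>\<omega>'\<in>space M - A' 1. X \<omega> \<ge> X \<omega>')"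
proof -
  note M = assms(1)
  interpret prob_space M by fact
  note QQ = assms(5)
  note hA = assms(13)
  have sp: "splitP M" using assms(2) splitP_atomless[OF M] splitP_equi[OF M] by blast
  obtain Bd where Xm: "X \<in> borel_measurable M" and Bd: "\<forall>\<omega>\<in>space M. \<bar>X \<omega>\<bar> \<le> Bd"
    using assms(7) unfolding bounded_rv_def by blast
  define S where "S = {\<omega>\<in>space M. ereal (X \<omega>) > x_star}"
  have Sm: "S \<in> sets M" unfolding S_def using Xm by measurable
  have Ssp: "S \<subseteq> space M" unfolding S_def by auto
  have Am: "\<forall>i\<in>{1..n}. A i \<in> sets M" and Acov: "(\<Union>i\<in>{1..n}. A i) = space M"
    using assms(12) unfolding Pi_n_def by auto
  show ?thesis
  proof (cases "n = 1")
    case True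
    then have "A 1 = space M" using Acov by simp
    then show ?thesis using assms(12) hA unfolding S_def by (intro bexI[of _ A]) auto
  next
    case False
    with assms(3) have n2: "2 \<le> n" by simp
    define D0 where "D0 = (A 1 \<inter> S) - (\<Union>j\<in>{2..n}. A j)"
    have Am2: "A j \<in> sets M" if "j \<in> {2..n}" for j using Am that by auto
    have A1m: "A 1 \<in> sets M" using Am assms(3) by auto
    have D0m: "D0 \<in> sets M" unfolding D0_def using A1m Am2 Sm by auto
    have D0S: "D0 \<subseteq> S" unfolding D0_def by auto
    obtain B c where B: "B \<in> sets M" "B \<subseteq> S" "measure M B = measure M D0"
      and cB: "\<forall>\<omega>\<in>B. c \<le> X \<omega>" and cSB: "\<forall>\<omega>\<in>S - B. X \<omega> \<le> c"
      using upper_set[OF M sp Sm D0m D0S Xm Bd] by blast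
    define R where "R i = ((B - D0) \<inter> A i) - (\<Union>j\<in>{2..<i}. A j)" for i
    have Rm: "R i \<in> sets M" if "i \<in> {2..n}" for i
    proof -
      have "(\<Union>j\<in>{2..<i}. A j) \<in> sets M" using Am2 that by auto
      then show ?thesis unfolding R_def using B D0m Am2[OF that] by auto
    qed
    have disj: "disjoint_family_on R {2..n}"
      unfolding disjoint_family_on_def
    proof (intro ballI impI)
      fix i j assume ij: "i \<in> {2..n}" "j \<in> {2..n}" "i \<noteq> j"
      show "R i \<inter> R j = {}"
      proof (cases "i < j")
        case True then show ?thesis using ij unfolding R_def by auto
      next
        case False then have "j < i" using ij by simp
        then show ?thesis using ij unfolding R_def by auto
      qed
    qed
    have Runion: "(\<Union>i\<in>{2..n}. R i) = B - D0"
    proof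
      show "(\<Union>i\<in>{2..n}. R i) \<subseteq> B - D0" unfolding R_def by auto
      show "B - D0 \<subseteq> (\<Union>i\<in>{2..n}. R i)"
      proof
        fix \<omega> assume w: "\<omega> \<in> B - D0"
        have wS: "\<omega> \<in> S" using w B by auto
        have "\<exists>j. j \<in> {2..n} \<and> \<omega> \<in> A j"
        proof (cases "\<omega> \<in> A 1")
          case True then show ?thesis using w wS unfolding D0_def by auto
        next
          case False
          have "\<omega> \<in> space M" using wS Ssp by auto
          then have "\<omega> \<in> (\<Union>i\<in>{1..n}. A i)" using Acov by simp
          then obtain j where "j \<in> {1..n}" "\<omega> \<in> A j" by blast
          with False have "j \<in> {2..n}" by (cases "j = 1") auto
          then show ?thesis using \<open>\<omega> \<in> A j\<close> by auto
        qed
        then obtain j where j: "j \<in> {2..n} \<and> \<omega> \<in> A j" by blast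
        define i where "i = (LEAST j. j \<in> {2..n} \<and> \<omega> \<in> A j)"
        have i: "i \<in> {2..n} \<and> \<omega> \<in> A i" unfolding i_def by (rule LeastI[of _ j]) (rule j)
        have "\<omega> \<notin> A k" if "k \<in> {2..<i}" for k
        proof
          assume "\<omega> \<in> A k"
          then have "i \<le> k" unfolding i_def using that i by (intro Least_le) auto
          then show False using that by auto
        qed
        then have "\<omega> \<in> R i" unfolding R_def using w i by auto
        then show "\<omega> \<in> (\<Union>i\<in>{2..n}. R i)" using i by auto
      qed
    qed
    have sumR: "(\<Sum>i\<in>{2..n}. measure M (R i)) = measure M (B - D0)"
    proof -
      have "R ` {2..n} \<subseteq> sets M" using Rm by auto
      then show ?thesis using finite_measure_finite_Union[of "{2..n}" R] disj Runion by simp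
    qed
    have mBD: "measure M (B - D0) = measure M (D0 - B)"
      using finite_measure_Diff'[OF B(1) D0m] finite_measure_Diff'[OF D0m B(1)] B(3)
      by (simp add: Int_commute)
    have DBm: "D0 - B \<in> sets M" using D0m B by auto
    obtain C where C: "\<forall>i\<in>{2..n}. C i \<in> sets M \<and> C i \<subseteq> D0 - B \<and> measure M (C i) = measure M (R i)"
      and Cun: "(\<Union>i\<in>{2..n}. C i) = D0 - B"
      using split_family[OF M sp n2, of "D0 - B" R] DBm Rm sumR mBD by auto
    define A' where "A' i = (if i = 1 then B else ((A i \<inter> S) - B) \<union> C i \<union> (if i = 2 then space M - S else {}))" for i
    have A'm: "\<forall>i\<in>{1..n}. A' i \<in> sets M"
    proof
      fix i assume i: "i \<in> {1..n}"
      show "A' i \<in> sets M"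
      proof (cases "i = 1")
        case True then show ?thesis unfolding A'_def using B by simp
      next
        case False then have i2: "i \<in> {2..n}" using i by auto
        have "C i \<in> sets M" using C i2 by auto
        then show ?thesis unfolding A'_def using Am2[OF i2] Sm B by auto
      qed
    qed
    have A'sub: "A' i \<subseteq> space M" if "i \<in> {1..n}" for i
      using A'm that sets.sets_into_space by blast
    have A'cov: "(\<Union>i\<in>{1..n}. A' i) = space M"
    proof
      show "(\<Union>i\<in>{1..n}. A' i) \<subseteq> space M" using A'sub by (meson UN_least)
      show "space M \<subseteq> (\<Union>i\<in>{1..n}. A' i)"
      proof
        fix \<omega> assume w: "\<omega> \<in> space M"
        show "\<omega> \<in> (\<Union>i\<in>{1..n}. A' i)"
        proof (cases "\<omega> \<in> S")
          case False
          then have "\<omega> \<in> A' 2" unfolding A'_def using w by auto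
          then show ?thesis using n2 by auto
        next
          case wS: True
          show ?thesis
          proof (cases "\<omega> \<in> B")
            case True then have "\<omega> \<in> A' 1" unfolding A'_def by simp
            then show ?thesis using n2 by auto
          next
            case nB: False
            show ?thesis
            proof (cases "\<exists>j\<in>{2..n}. \<omega> \<in> A j")
              case True
              then obtain j where j: "j \<in> {2..n}" "\<omega> \<in> A j" by blast
              then have "\<omega> \<in> A' j" unfolding A'_def using wS nB by auto
              then show ?thesis using j by auto
            next
              case False
              have "\<omega> \<in> (\<Union>i\<in>{1..n}. A i)" using Acov w by simp
              then obtain j where "j \<in> {1..n}" "\<omega> \<in> A j" by blast
              with False have "\<omega> \<in> A 1" by (cases "j = 1") auto
              then have "\<omega> \<in> D0 - B" unfolding D0_def using False wS nB by auto
              then have "\<omega> \<in> (\<Union>i\<in>{2..n}. C i)" using Cun by simp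
              then obtain j where j: "j \<in> {2..n}" "\<omega> \<in> C j" by blast
              then have "\<omega> \<in> A' j" unfolding A'_def by auto
              then show ?thesis using j by auto
            qed
          qed
        qed
      qed
    qed
    have A'Pi: "A' \<in> Pi_n M n" unfolding Pi_n_def using A'm A'cov by auto
    have meas: "\<forall>i\<in>{1..n}. \<forall>Q\<in>PP i. measure Q (A' i \<inter> S) \<le> \<alpha> i"
    proof (intro ballI)
      fix i Q assume i: "i \<in> {1..n}" and Q: "Q \<in> PP i"
      have Qp: "prob_space Q" and Qs: "sets Q = sets M" and Qac: "absolutely_continuous M Q"
        using QQ i Q by auto
      interpret q: prob_space Q by fact
      have hAi: "measure Q (A i \<inter> S) \<le> \<alpha> i" using hA i Q unfolding S_def by auto
      show "measure Q (A' i \<inter> S) \<le> \<alpha> i"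
      proof (cases "i = 1")
        case True
        have dd: "density_decreasing_in M Q X" using assms(8) Q True by auto
        have eq1: "A' i \<inter> S = B" unfolding A'_def using True B by auto
        have BD: "measure Q (B - D0) \<le> measure Q (D0 - B)"
        proof (rule cmp_dec[OF M Qp Qs Qac dd _ DBm, of _ c])
          show "B - D0 \<in> sets M" using B D0m by auto
          show "\<forall>\<omega>\<in>B - D0. c \<le> X \<omega>" using cB by auto
          show "\<forall>\<omega>\<in>D0 - B. X \<omega> \<le> c" using cSB D0S by auto
          show "measure M (B - D0) \<le> measure M (D0 - B)" using mBD by simp
        qed
        have "measure Q B = measure Q (B \<inter> D0) + measure Q (B - D0)"
          using q.finite_measure_Diff'[of B D0] B D0m Qs by simp
        also have "\<dots> \<le> measure Q (D0 \<inter> B) + measure Q (D0 - B)" using BD by (simp add: Int_commute)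
        also have "\<dots> = measure Q D0"
          using q.finite_measure_Diff'[of D0 B] B D0m Qs by simp
        also have "\<dots> \<le> measure Q (A 1 \<inter> S)"
          using A1m Sm Qs unfolding D0_def by (intro q.finite_measure_mono) auto
        finally show ?thesis using eq1 hAi True by simp
      next
        case False
        then have i2: "i \<in> {2..n}" using i by auto
        have di: "density_increasing_in M Q X" using assms(9) Q i2 by auto
        have Ci: "C i \<in> sets M" "C i \<subseteq> D0 - B" "measure M (C i) = measure M (R i)" using C i2 by auto
        have eq2: "A' i \<inter> S = ((A i \<inter> S) - B) \<union> C i" unfolding A'_def using False Ci D0S by auto
        have AiSm: "(A i \<inter> S) - B \<in> sets M" using Am2[OF i2] Sm B by auto
        have CR: "measure Q (C i) \<le> measure Q (R i)"
        proof (rule cmp_inc[OF M Qp Qs Qac di Ci(1) Rm[OF i2], of c])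
          show "\<forall>\<omega>\<in>C i. X \<omega> \<le> c" using Ci(2) cSB D0S by auto
          show "\<forall>\<omega>\<in>R i. c \<le> X \<omega>" using cB unfolding R_def by auto
          show "measure M (C i) \<le> measure M (R i)" using Ci by simp
        qed
        have "measure Q (A' i \<inter> S) \<le> measure Q ((A i \<inter> S) - B) + measure Q (C i)"
          unfolding eq2 using AiSm Ci Qs by (intro measure_Un_le) auto
        also have "\<dots> \<le> measure Q ((A i \<inter> S) - B) + measure Q (R i)" using CR by simp
        also have "\<dots> = measure Q (((A i \<inter> S) - B) \<union> R i)"
          using AiSm Rm[OF i2] Qs by (intro q.finite_measure_Union[symmetric]) (auto simp: R_def)
        also have "\<dots> \<le> measure Q (A i \<inter> S)"
          using Am2[OF i2] Sm Qs B by (intro q.finite_measure_mono) (auto simp: R_def)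
        finally show ?thesis using hAi by simp
      qed
    qed
    have tail: "\<forall>\<omega>\<in>A' 1. \<forall>\<omega>'\<in>space M - A' 1. X \<omega> \<ge> X \<omega>'"
    proof (intro ballI)
      fix \<omega> \<omega>' assume w: "\<omega> \<in> A' 1" and w': "\<omega>' \<in> space M - A' 1"
      have wB: "\<omega> \<in> B" and w'B: "\<omega>' \<notin> B" "\<omega>' \<in> space M" using w w' unfolding A'_def by auto
      show "X \<omega> \<ge> X \<omega>'"
      proof (cases "\<omega>' \<in> S")
        case True
        then show ?thesis using cSB cB wB w'B by force
      next
        case False
        then have "\<not> x_star < ereal (X \<omega>')" using w'B unfolding S_def by auto
        moreover have "x_star < ereal (X \<omega>)" using wB B unfolding S_def by auto
        ultimately have "ereal (X \<omega>') < ereal (X \<omega>)" by (meson less_le_trans not_less)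
        then show ?thesis by simp
      qed
    qed
    show ?thesis using A'Pi meas tail unfolding S_def by blast
  qed
qed

end
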